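(* For every integer $n \geq 8$, $h(n,5) \leq \frac{7n + c(n \bmod 6)}{6}$, where $c(0)=0$, $c(1)=35$, $c(2)=16$, $c(3)=27$, $c(4)=8$, $c(5)=28$.
   Context: All graphs are finite and simple. A degree monotone path in a graph $G$ is a path $v_1v_2\ldots v_m$ such that $\deg(v_1)\le \cdots\le \deg(v_m)$ or $\deg(v_1)\ge \cdots\ge \deg(v_m)$; its length is its number of vertices. $mp(G)$ denotes the maximum length of a degree monotone path in $G$. For a pair $e$ of non-adjacent vertices, $G+e$ is $G$ with the edge $e$ added. A graph $G$ is $k$-saturated if $mp(G)\le k-1$ and $mp(G+e)\ge k$ for every pair $e$ of non-adjacent vertices of $G$ (so $K_m$ is $k$-saturated for $m\le k-1$). $h(n,k)$ is the minimum number of edges of a $k$-saturated graph on $n$ vertices. *)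

theory Defs
  imports Complex_Main "HOL-Library.Extended_Nat"
begin

definition simple_graph :: "nat \<Rightarrow> nat set set \<Rightarrow> bool" where
  "simple_graph n E \<longleftrightarrow> (\<forall>e\<in>E. \<exists>u v. e = {u, v} \<and> u \<noteq> v \<and> u < n \<and> v < n)"

definition deg :: "nat set set \<Rightarrow> nat \<Rightarrow> nat" where
  "deg E v = card {u. {u, v} \<in> E}"

definition is_path :: "nat \<Rightarrow> nat set set \<Rightarrow> nat list \<Rightarrow> bool" where
  "is_path n E xs \<longleftrightarrow> distinct xs \<and> set xs \<subseteq> {0..<n}
     \<and> (\<forall>i. Suc i < length xs \<longrightarrow> {xs ! i, xs ! Suc i} \<in> E)"

definition degree_monotone_path :: "nat \<Rightarrow> nat set set \<Rightarrow> nat list \<Rightarrow> bool" where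
  "degree_monotone_path n E xs \<longleftrightarrow> is_path n E xs \<and>
     (sorted (map (deg E) xs) \<or> sorted (rev (map (deg E) xs)))"

(* length = number of vertices *)
definition mp :: "nat \<Rightarrow> nat set set \<Rightarrow> nat" where
  "mp n E = Max (length ` {xs. degree_monotone_path n E xs})"

definition saturated :: "nat \<Rightarrow> nat \<Rightarrow> nat set set \<Rightarrow> bool" where
  "saturated k n E \<longleftrightarrow> simple_graph n E \<and> mp n E \<le> k - 1 \<and>
     (\<forall>u v. u < n \<longrightarrow> v < n \<longrightarrow> u \<noteq> v \<longrightarrow> {u, v} \<notin> E \<longrightarrow> mp n (insert {u, v} E) \<ge> k)"

(* minimum number of edges of a k-saturated graph on n vertices (\<infinity> if none exists) *)
definition h :: "nat \<Rightarrow> nat \<Rightarrow> enat" where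
  "h n k = Inf {enat (card E) | E. saturated k n E}"

definition c :: "nat \<Rightarrow> nat" where
  "c r = (if r = 0 then 0 else if r = 1 then 35 else if r = 2 then 16
          else if r = 3 then 27 else if r = 4 then 8 else 28)"

end

theory Submission
  imports Defs
begin

definition sz :: "nat \<Rightarrow> nat" where
  "sz t = (if t = 0 then 4 else if t = 1 then 5 else 6)"

definition edgesT :: "nat \<Rightarrow> (nat \<times> nat) list" where
  "edgesT t = (if t = 0 then [(0,1),(0,2),(0,3),(1,2),(1,3),(2,3)]
    else if t = 1 then [(0,1),(0,2),(0,3),(0,4),(1,2),(1,3),(1,4),(2,3),(2,4)]
    else [(0,1),(0,2),(0,3),(1,4),(1,5),(2,4),(3,5)])"

definition adjT :: "nat \<Rightarrow> nat \<Rightarrow> nat \<Rightarrow> bool" where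
  "adjT t x y \<longleftrightarrow> (x, y) \<in> set (edgesT t) \<or> (y, x) \<in> set (edgesT t)"

definition degT :: "nat \<Rightarrow> nat \<Rightarrow> nat" where
  "degT t x = length (filter (adjT t x) [0..<sz t])"

lemma adjT_sym: "adjT t x y = adjT t y x"
  unfolding adjT_def by auto

lemma adjT_irrefl: "\<not> adjT t x x"
  unfolding adjT_def edgesT_def by auto

lemma adjT_lt: "adjT t x y \<Longrightarrow> x < sz t \<and> y < sz t"
  unfolding adjT_def edgesT_def sz_def by (auto split: if_splits)

definition paths5 :: "nat \<Rightarrow> nat list list" where
  "paths5 t = [[x1,x2,x3,x4,x5]. x1 \<leftarrow> [0..<sz t], x2 \<leftarrow> filter (adjT t x1) [0..<sz t],
     x3 \<leftarrow> filter (\<lambda>y. adjT t x2 y \<and> y \<noteq> x1) [0..<sz t],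
     x4 \<leftarrow> filter (\<lambda>y. adjT t x3 y \<and> y \<noteq> x1 \<and> y \<noteq> x2) [0..<sz t],
     x5 \<leftarrow> filter (\<lambda>y. adjT t x4 y \<and> y \<noteq> x1 \<and> y \<noteq> x2 \<and> y \<noteq> x3) [0..<sz t]]"

definition good5 :: "nat \<Rightarrow> nat list \<Rightarrow> bool" where
  "good5 t l \<longleftrightarrow> (sorted (map (degT t) l) \<or> sorted (rev (map (degT t) l)))"

lemma paths5_check: "list_all (\<lambda>t. list_all (\<lambda>l. \<not> good5 t l) (paths5 t)) [0,1,2]"
  by code_simp

lemma no_mono5:
  assumes "t \<le> 2" "distinct [x1,x2,x3,x4,x5]"
    "adjT t x1 x2" "adjT t x2 x3" "adjT t x3 x4" "adjT t x4 x5"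
    "(degT t x1 \<le> degT t x2 \<and> degT t x2 \<le> degT t x3 \<and> degT t x3 \<le> degT t x4 \<and> degT t x4 \<le> degT t x5)
     \<or> (degT t x1 \<ge> degT t x2 \<and> degT t x2 \<ge> degT t x3 \<and> degT t x3 \<ge> degT t x4 \<and> degT t x4 \<ge> degT t x5)"
  shows False
proof -
  have m: "[x1,x2,x3,x4,x5] \<in> set (paths5 t)"
    using assms(2-6) adjT_lt[OF assms(3)] adjT_lt[OF assms(4)] adjT_lt[OF assms(5)] adjT_lt[OF assms(6)]
    unfolding paths5_def by (simp add: image_iff) blast
  have g: "good5 t [x1,x2,x3,x4,x5]" using assms(7) unfolding good5_def by auto
  have "t = 0 \<or> t = 1 \<or> t = 2" using assms(1) by auto
  then show False using paths5_check m g by (auto simp: list_all_iff)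
qed


definition tyS :: "nat \<Rightarrow> nat \<Rightarrow> bool \<Rightarrow> nat" where
  "tyS t1 t2 s = (if s then t2 else t1)"

definition madj :: "nat \<Rightarrow> nat \<Rightarrow> bool \<times> nat \<Rightarrow> bool \<times> nat \<Rightarrow> bool \<times> nat \<Rightarrow> bool \<times> nat \<Rightarrow> bool" where
  "madj t1 t2 pu pv p q \<longleftrightarrow> (fst p = fst q \<and> adjT (tyS t1 t2 (fst p)) (snd p) (snd q))
      \<or> (p = pu \<and> q = pv) \<or> (p = pv \<and> q = pu)"

definition mdeg :: "nat \<Rightarrow> nat \<Rightarrow> bool \<times> nat \<Rightarrow> bool \<times> nat \<Rightarrow> bool \<times> nat \<Rightarrow> nat" where
  "mdeg t1 t2 pu pv p = degT (tyS t1 t2 (fst p)) (snd p) + (if p = pu \<or> p = pv then 1 else 0)"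

definition okW :: "nat \<Rightarrow> nat \<Rightarrow> bool \<Rightarrow> bool \<times> nat \<Rightarrow> bool \<times> nat \<Rightarrow> (bool \<times> nat) list \<Rightarrow> bool" where
  "okW t1 t2 intl pu pv ws \<longleftrightarrow> length ws = 5 \<and> distinct ws
     \<and> list_all (\<lambda>p. snd p < sz (tyS t1 t2 (fst p))) ws
     \<and> (intl \<longrightarrow> list_all (\<lambda>p. \<not> fst p) ws)
     \<and> successively (madj t1 t2 pu pv) ws
     \<and> (sorted (map (mdeg t1 t2 pu pv) ws) \<or> sorted (rev (map (mdeg t1 t2 pu pv) ws)))"

definition keysC :: "(nat \<times> nat \<times> nat \<times> nat) list" where
  "keysC = [(t1,t2,a,b). t1 \<leftarrow> [0,1,2], t2 \<leftarrow> [0,1,2], a \<leftarrow> [0..<sz t1], b \<leftarrow> [0..<sz t2]]"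

definition keysI :: "(nat \<times> nat \<times> nat) list" where
  "keysI = [(t,a,b). t \<leftarrow> [0,1,2], a \<leftarrow> [0..<sz t], b \<leftarrow> filter (\<lambda>b. a \<noteq> b \<and> \<not> adjT t a b) [0..<sz t]]"

definition witsC :: "(bool \<times> nat) list list" where
  "witsC = [
   [(False, 0), (True, 0), (True, 1), (True, 2), (True, 3)],
   [(False, 0), (True, 1), (True, 0), (True, 2), (True, 3)],
   [(False, 0), (True, 2), (True, 0), (True, 1), (True, 3)],
   [(False, 0), (True, 3), (True, 0), (True, 1), (True, 2)],
   [(False, 0), (False, 2), (False, 3), (False, 1), (True, 0)],
   [(False, 0), (False, 2), (False, 3), (False, 1), (True, 1)],
   [(False, 0), (False, 2), (False, 3), (False, 1), (True, 2)],
   [(False, 0), (False, 2), (False, 3), (False, 1), (True, 3)],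
   [(False, 0), (False, 1), (False, 3), (False, 2), (True, 0)],
   [(False, 0), (False, 1), (False, 3), (False, 2), (True, 1)],
   [(False, 0), (False, 1), (False, 3), (False, 2), (True, 2)],
   [(False, 0), (False, 1), (False, 3), (False, 2), (True, 3)],
   [(False, 0), (False, 1), (False, 2), (False, 3), (True, 0)],
   [(False, 0), (False, 1), (False, 2), (False, 3), (True, 1)],
   [(False, 0), (False, 1), (False, 2), (False, 3), (True, 2)],
   [(False, 0), (False, 1), (False, 2), (False, 3), (True, 3)],
   [(False, 1), (False, 2), (False, 3), (False, 0), (True, 0)],
   [(False, 1), (False, 2), (False, 3), (False, 0), (True, 1)],
   [(False, 1), (False, 2), (False, 3), (False, 0), (True, 2)],
   [(False, 0), (True, 3), (True, 0), (True, 1), (True, 2)],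
   [(False, 0), (True, 4), (True, 0), (True, 1), (True, 2)],
   [(False, 0), (False, 2), (False, 3), (False, 1), (True, 0)],
   [(False, 0), (False, 2), (False, 3), (False, 1), (True, 1)],
   [(False, 0), (False, 2), (False, 3), (False, 1), (True, 2)],
   [(False, 0), (False, 1), (True, 3), (True, 0), (True, 1)],
   [(False, 0), (False, 1), (True, 4), (True, 0), (True, 1)],
   [(False, 0), (False, 1), (False, 3), (False, 2), (True, 0)],
   [(False, 0), (False, 1), (False, 3), (False, 2), (True, 1)],
   [(False, 0), (False, 1), (False, 3), (False, 2), (True, 2)],
   [(False, 0), (False, 1), (False, 2), (True, 3), (True, 0)],
   [(False, 0), (False, 1), (False, 2), (True, 4), (True, 0)],
   [(False, 0), (False, 1), (False, 2), (False, 3), (True, 0)],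
   [(False, 0), (False, 1), (False, 2), (False, 3), (True, 1)],
   [(False, 0), (False, 1), (False, 2), (False, 3), (True, 2)],
   [(False, 0), (False, 1), (False, 2), (False, 3), (True, 3)],
   [(False, 0), (False, 1), (False, 2), (False, 3), (True, 4)],
   [(False, 0), (True, 0), (True, 1), (True, 4), (True, 2)],
   [(False, 0), (True, 1), (True, 0), (True, 2), (True, 4)],
   [(False, 0), (True, 2), (True, 0), (True, 1), (True, 4)],
   [(False, 0), (True, 3), (True, 0), (True, 1), (True, 4)],
   [(False, 0), (True, 4), (True, 1), (True, 0), (True, 2)],
   [(False, 0), (True, 5), (True, 1), (True, 0), (True, 2)],
   [(False, 0), (False, 2), (False, 3), (False, 1), (True, 0)],
   [(False, 0), (False, 2), (False, 3), (False, 1), (True, 1)],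
   [(False, 1), (True, 2), (True, 0), (True, 1), (True, 4)],
   [(False, 1), (True, 3), (True, 0), (True, 1), (True, 4)],
   [(False, 1), (True, 4), (True, 1), (True, 0), (True, 2)],
   [(False, 1), (True, 5), (True, 1), (True, 0), (True, 2)],
   [(False, 0), (False, 1), (False, 3), (False, 2), (True, 0)],
   [(False, 0), (False, 1), (False, 3), (False, 2), (True, 1)],
   [(False, 2), (True, 2), (True, 0), (True, 1), (True, 4)],
   [(False, 2), (True, 3), (True, 0), (True, 1), (True, 4)],
   [(False, 2), (True, 4), (True, 1), (True, 0), (True, 2)],
   [(False, 2), (True, 5), (True, 1), (True, 0), (True, 2)],
   [(False, 0), (False, 1), (False, 2), (False, 3), (True, 0)],
   [(False, 0), (False, 1), (False, 2), (False, 3), (True, 1)],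
   [(False, 3), (True, 2), (True, 0), (True, 1), (True, 4)],
   [(False, 3), (True, 3), (True, 0), (True, 1), (True, 4)],
   [(False, 3), (True, 4), (True, 1), (True, 0), (True, 2)],
   [(False, 3), (True, 5), (True, 1), (True, 0), (True, 2)],
   [(False, 0), (True, 0), (True, 1), (True, 2), (True, 3)],
   [(False, 0), (True, 1), (True, 0), (True, 2), (True, 3)],
   [(False, 0), (True, 2), (True, 0), (True, 1), (True, 3)],
   [(False, 0), (True, 3), (True, 0), (True, 1), (True, 2)],
   [(False, 1), (True, 0), (True, 1), (True, 2), (True, 3)],
   [(False, 1), (True, 1), (True, 0), (True, 2), (True, 3)],
   [(False, 1), (True, 2), (True, 0), (True, 1), (True, 3)],
   [(False, 1), (True, 3), (True, 0), (True, 1), (True, 2)],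
   [(False, 2), (True, 0), (True, 1), (True, 2), (True, 3)],
   [(False, 2), (True, 1), (True, 0), (True, 2), (True, 3)],
   [(False, 2), (True, 2), (True, 0), (True, 1), (True, 3)],
   [(False, 2), (True, 3), (True, 0), (True, 1), (True, 2)],
   [(False, 0), (False, 1), (False, 2), (False, 3), (True, 0)],
   [(False, 0), (False, 1), (False, 2), (False, 3), (True, 1)],
   [(False, 0), (False, 1), (False, 2), (False, 3), (True, 2)],
   [(False, 0), (False, 1), (False, 2), (False, 3), (True, 3)],
   [(False, 0), (False, 1), (False, 2), (False, 4), (True, 0)],
   [(False, 0), (False, 1), (False, 2), (False, 4), (True, 1)],
   [(False, 0), (False, 1), (False, 2), (False, 4), (True, 2)],
   [(False, 0), (False, 1), (False, 2), (False, 4), (True, 3)],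
   [(False, 0), (True, 0), (True, 1), (True, 2), (True, 3)],
   [(False, 0), (True, 1), (True, 0), (True, 2), (True, 3)],
   [(False, 0), (True, 2), (True, 0), (True, 1), (True, 3)],
   [(False, 0), (True, 3), (True, 0), (True, 1), (True, 2)],
   [(False, 0), (True, 4), (True, 0), (True, 1), (True, 2)],
   [(False, 1), (True, 0), (True, 1), (True, 2), (True, 3)],
   [(False, 1), (True, 1), (True, 0), (True, 2), (True, 3)],
   [(False, 1), (True, 2), (True, 0), (True, 1), (True, 3)],
   [(False, 1), (True, 3), (True, 0), (True, 1), (True, 2)],
   [(False, 1), (True, 4), (True, 0), (True, 1), (True, 2)],
   [(False, 2), (True, 0), (True, 1), (True, 2), (True, 3)],
   [(False, 2), (True, 1), (True, 0), (True, 2), (True, 3)],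
   [(False, 2), (True, 2), (True, 0), (True, 1), (True, 3)],
   [(False, 2), (True, 3), (True, 0), (True, 1), (True, 2)],
   [(False, 2), (True, 4), (True, 0), (True, 1), (True, 2)],
   [(False, 0), (False, 1), (False, 2), (False, 3), (True, 0)],
   [(False, 0), (False, 1), (False, 2), (False, 3), (True, 1)],
   [(False, 0), (False, 1), (False, 2), (False, 3), (True, 2)],
   [(False, 0), (False, 1), (False, 2), (False, 3), (True, 3)],
   [(False, 0), (False, 1), (False, 2), (False, 3), (True, 4)],
   [(False, 0), (False, 1), (False, 2), (False, 4), (True, 0)],
   [(False, 0), (False, 1), (False, 2), (False, 4), (True, 1)],
   [(False, 0), (False, 1), (False, 2), (False, 4), (True, 2)],
   [(False, 0), (False, 1), (False, 2), (False, 4), (True, 3)],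
   [(False, 0), (False, 1), (False, 2), (False, 4), (True, 4)],
   [(False, 0), (True, 0), (True, 1), (True, 4), (True, 2)],
   [(False, 0), (True, 1), (True, 0), (True, 2), (True, 4)],
   [(False, 0), (True, 2), (True, 0), (True, 1), (True, 4)],
   [(False, 0), (True, 3), (True, 0), (True, 1), (True, 4)],
   [(False, 0), (True, 4), (True, 1), (True, 0), (True, 2)],
   [(False, 0), (True, 5), (True, 1), (True, 0), (True, 2)],
   [(False, 1), (True, 0), (True, 1), (True, 4), (True, 2)],
   [(False, 1), (True, 1), (True, 0), (True, 2), (True, 4)],
   [(False, 1), (True, 2), (True, 0), (True, 1), (True, 4)],
   [(False, 1), (True, 3), (True, 0), (True, 1), (True, 4)],
   [(False, 1), (True, 4), (True, 1), (True, 0), (True, 2)],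
   [(False, 1), (True, 5), (True, 1), (True, 0), (True, 2)],
   [(False, 2), (True, 0), (True, 1), (True, 4), (True, 2)],
   [(False, 2), (True, 1), (True, 0), (True, 2), (True, 4)],
   [(False, 2), (True, 2), (True, 0), (True, 1), (True, 4)],
   [(False, 2), (True, 3), (True, 0), (True, 1), (True, 4)],
   [(False, 2), (True, 4), (True, 1), (True, 0), (True, 2)],
   [(False, 2), (True, 5), (True, 1), (True, 0), (True, 2)],
   [(False, 0), (False, 1), (False, 2), (False, 3), (True, 0)],
   [(False, 0), (False, 1), (False, 2), (False, 3), (True, 1)],
   [(False, 0), (False, 1), (False, 2), (False, 3), (True, 2)],
   [(False, 0), (False, 1), (False, 2), (False, 3), (True, 3)],
   [(False, 0), (False, 1), (False, 2), (False, 3), (True, 4)],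
   [(False, 0), (False, 1), (False, 2), (False, 3), (True, 5)],
   [(False, 0), (False, 1), (False, 2), (False, 4), (True, 0)],
   [(False, 0), (False, 1), (False, 2), (False, 4), (True, 1)],
   [(False, 0), (False, 1), (False, 2), (False, 4), (True, 2)],
   [(False, 0), (False, 1), (False, 2), (False, 4), (True, 3)],
   [(False, 0), (False, 1), (False, 2), (False, 4), (True, 4)],
   [(False, 0), (False, 1), (False, 2), (False, 4), (True, 5)],
   [(False, 0), (True, 0), (True, 1), (True, 2), (True, 3)],
   [(False, 0), (True, 1), (True, 0), (True, 2), (True, 3)],
   [(False, 0), (True, 2), (True, 0), (True, 1), (True, 3)],
   [(False, 0), (True, 3), (True, 0), (True, 1), (True, 2)],
   [(False, 1), (True, 0), (True, 1), (True, 2), (True, 3)],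
   [(False, 1), (True, 1), (True, 0), (True, 2), (True, 3)],
   [(False, 1), (True, 2), (True, 0), (True, 1), (True, 3)],
   [(False, 1), (True, 3), (True, 0), (True, 1), (True, 2)],
   [(False, 2), (False, 0), (False, 1), (False, 5), (False, 3)],
   [(False, 2), (False, 0), (False, 1), (False, 5), (False, 3)],
   [(False, 2), (False, 0), (False, 1), (False, 5), (False, 3)],
   [(False, 2), (False, 0), (False, 1), (False, 5), (False, 3)],
   [(False, 2), (False, 4), (False, 1), (False, 0), (False, 3)],
   [(False, 2), (False, 4), (False, 1), (False, 0), (False, 3)],
   [(False, 2), (False, 4), (False, 1), (False, 0), (False, 3)],
   [(False, 2), (False, 4), (False, 1), (False, 0), (False, 3)],
   [(False, 2), (False, 0), (False, 1), (False, 4), (True, 0)],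
   [(False, 2), (False, 0), (False, 1), (False, 4), (True, 1)],
   [(False, 2), (False, 0), (False, 1), (False, 4), (True, 2)],
   [(False, 2), (False, 0), (False, 1), (False, 4), (True, 3)],
   [(False, 2), (False, 0), (False, 1), (False, 5), (True, 0)],
   [(False, 2), (False, 0), (False, 1), (False, 5), (True, 1)],
   [(False, 2), (False, 0), (False, 1), (False, 5), (True, 2)],
   [(False, 2), (False, 0), (False, 1), (False, 5), (True, 3)],
   [(False, 2), (False, 4), (False, 1), (False, 0), (True, 0)],
   [(False, 2), (False, 4), (False, 1), (False, 0), (True, 1)],
   [(False, 2), (False, 4), (False, 1), (False, 0), (True, 2)],
   [(False, 0), (True, 3), (True, 0), (True, 1), (True, 2)],
   [(False, 0), (True, 4), (True, 0), (True, 1), (True, 2)],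
   [(False, 4), (False, 2), (False, 0), (False, 1), (True, 0)],
   [(False, 4), (False, 2), (False, 0), (False, 1), (True, 1)],
   [(False, 4), (False, 2), (False, 0), (False, 1), (True, 2)],
   [(False, 0), (False, 1), (True, 3), (True, 0), (True, 1)],
   [(False, 0), (False, 1), (True, 4), (True, 0), (True, 1)],
   [(False, 2), (False, 0), (False, 1), (False, 5), (False, 3)],
   [(False, 2), (False, 0), (False, 1), (False, 5), (False, 3)],
   [(False, 2), (False, 0), (False, 1), (False, 5), (False, 3)],
   [(False, 0), (False, 2), (True, 3), (True, 0), (True, 1)],
   [(False, 0), (False, 2), (True, 4), (True, 0), (True, 1)],
   [(False, 2), (False, 4), (False, 1), (False, 0), (False, 3)],
   [(False, 2), (False, 4), (False, 1), (False, 0), (False, 3)],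
   [(False, 2), (False, 4), (False, 1), (False, 0), (False, 3)],
   [(False, 0), (False, 3), (True, 3), (True, 0), (True, 1)],
   [(False, 0), (False, 3), (True, 4), (True, 0), (True, 1)],
   [(False, 2), (False, 0), (False, 1), (False, 4), (True, 0)],
   [(False, 2), (False, 0), (False, 1), (False, 4), (True, 1)],
   [(False, 2), (False, 0), (False, 1), (False, 4), (True, 2)],
   [(False, 0), (False, 1), (False, 4), (True, 3), (True, 0)],
   [(False, 0), (False, 1), (False, 4), (True, 4), (True, 0)],
   [(False, 2), (False, 0), (False, 1), (False, 5), (True, 0)],
   [(False, 2), (False, 0), (False, 1), (False, 5), (True, 1)],
   [(False, 2), (False, 0), (False, 1), (False, 5), (True, 2)],
   [(False, 0), (False, 1), (False, 5), (True, 3), (True, 0)],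
   [(False, 0), (False, 1), (False, 5), (True, 4), (True, 0)],
   [(False, 0), (True, 0), (True, 1), (True, 4), (True, 2)],
   [(False, 0), (True, 1), (True, 0), (True, 2), (True, 4)],
   [(False, 0), (True, 2), (True, 0), (True, 1), (True, 4)],
   [(False, 0), (True, 3), (True, 0), (True, 1), (True, 4)],
   [(False, 0), (True, 4), (True, 1), (True, 0), (True, 2)],
   [(False, 0), (True, 5), (True, 1), (True, 0), (True, 2)],
   [(False, 1), (True, 0), (True, 1), (True, 4), (True, 2)],
   [(False, 1), (True, 1), (True, 0), (True, 2), (True, 4)],
   [(False, 1), (True, 2), (True, 0), (True, 1), (True, 4)],
   [(False, 1), (True, 3), (True, 0), (True, 1), (True, 4)],
   [(False, 1), (True, 4), (True, 1), (True, 0), (True, 2)],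
   [(False, 1), (True, 5), (True, 1), (True, 0), (True, 2)],
   [(False, 2), (False, 0), (False, 1), (False, 5), (False, 3)],
   [(False, 2), (False, 0), (False, 1), (False, 5), (False, 3)],
   [(False, 0), (False, 2), (True, 2), (True, 0), (True, 1)],
   [(False, 0), (False, 2), (True, 3), (True, 0), (True, 1)],
   [(False, 0), (False, 2), (True, 4), (True, 1), (True, 0)],
   [(False, 0), (False, 2), (True, 5), (True, 1), (True, 0)],
   [(False, 2), (False, 4), (False, 1), (False, 0), (False, 3)],
   [(False, 2), (False, 4), (False, 1), (False, 0), (False, 3)],
   [(False, 0), (False, 3), (True, 2), (True, 0), (True, 1)],
   [(False, 0), (False, 3), (True, 3), (True, 0), (True, 1)],
   [(False, 0), (False, 3), (True, 4), (True, 1), (True, 0)],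
   [(False, 0), (False, 3), (True, 5), (True, 1), (True, 0)],
   [(False, 2), (False, 0), (False, 1), (False, 4), (True, 0)],
   [(False, 2), (False, 0), (False, 1), (False, 4), (True, 1)],
   [(False, 0), (False, 1), (False, 4), (True, 2), (True, 0)],
   [(False, 0), (False, 1), (False, 4), (True, 3), (True, 0)],
   [(False, 0), (False, 1), (False, 4), (True, 4), (True, 1)],
   [(False, 0), (False, 1), (False, 4), (True, 5), (True, 1)],
   [(False, 2), (False, 0), (False, 1), (False, 5), (True, 0)],
   [(False, 2), (False, 0), (False, 1), (False, 5), (True, 1)],
   [(False, 0), (False, 1), (False, 5), (True, 2), (True, 0)],
   [(False, 0), (False, 1), (False, 5), (True, 3), (True, 0)],
   [(False, 0), (False, 1), (False, 5), (True, 4), (True, 1)],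
   [(False, 0), (False, 1), (False, 5), (True, 5), (True, 1)]]"

definition witsI :: "(bool \<times> nat) list list" where
  "witsI = [
   [(False, 0), (False, 1), (False, 2), (False, 3), (False, 4)],
   [(False, 0), (False, 1), (False, 2), (False, 3), (False, 4)],
   [(False, 0), (False, 4), (False, 1), (False, 5), (False, 3)],
   [(False, 0), (False, 5), (False, 1), (False, 4), (False, 2)],
   [(False, 1), (False, 2), (False, 0), (False, 3), (False, 5)],
   [(False, 1), (False, 3), (False, 0), (False, 2), (False, 4)],
   [(False, 1), (False, 2), (False, 0), (False, 3), (False, 5)],
   [(False, 1), (False, 0), (False, 2), (False, 3), (False, 5)],
   [(False, 0), (False, 1), (False, 5), (False, 2), (False, 4)],
   [(False, 1), (False, 3), (False, 0), (False, 2), (False, 4)],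
   [(False, 1), (False, 0), (False, 2), (False, 3), (False, 5)],
   [(False, 0), (False, 1), (False, 4), (False, 3), (False, 5)],
   [(False, 0), (False, 4), (False, 1), (False, 5), (False, 3)],
   [(False, 0), (False, 1), (False, 4), (False, 3), (False, 5)],
   [(False, 0), (False, 1), (False, 4), (False, 5), (False, 3)],
   [(False, 0), (False, 5), (False, 1), (False, 4), (False, 2)],
   [(False, 0), (False, 1), (False, 5), (False, 2), (False, 4)],
   [(False, 0), (False, 1), (False, 4), (False, 5), (False, 3)]]"

lemma lens: "length keysC = length witsC" "length keysI = length witsI"
  by code_simp+

lemma witsC_ok: "list_all (\<lambda>(k,w). case k of (t1,t2,a,b) \<Rightarrow> okW t1 t2 False (False,a) (True,b) w) (zip keysC witsC)"
  by code_simp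

lemma witsI_ok: "list_all (\<lambda>(k,w). case k of (t,a,b) \<Rightarrow> okW t t True (False,a) (False,b) w) (zip keysI witsI)"
  by code_simp


lemma memcm: "x \<in> set xs \<Longrightarrow> y \<in> set (f x) \<Longrightarrow> y \<in> set (concat (map f xs))"
  by auto

lemma wit_cross:
  assumes "t1 \<le> 2" "t2 \<le> 2" "a < sz t1" "b < sz t2"
  shows "\<exists>w. okW t1 t2 False (False,a) (True,b) w"
proof -
  have t1m: "t1 \<in> set [0,1,2]" and t2m: "t2 \<in> set [0,1,2]" using assms by auto
  have "(t1,t2,a,b) \<in> set keysC" unfolding keysC_def
    apply (rule memcm[OF t1m]) apply (rule memcm[OF t2m]) apply (rule memcm[where x=a])
    using assms by auto
  then obtain w where "map_of (zip keysC witsC) (t1,t2,a,b) = Some w"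
    using map_of_zip_is_Some[OF lens(1)] by blast
  then have "((t1,t2,a,b), w) \<in> set (zip keysC witsC)" by (rule map_of_SomeD)
  then show ?thesis using witsC_ok by (auto simp: list_all_iff)
qed

lemma wit_int:
  assumes "t \<le> 2" "a < sz t" "b < sz t" "a \<noteq> b" "\<not> adjT t a b"
  shows "\<exists>w. okW t t True (False,a) (False,b) w"
proof -
  have tm: "t \<in> set [0,1,2]" using assms by auto
  have "(t,a,b) \<in> set keysI" unfolding keysI_def
    apply (rule memcm[OF tm]) apply (rule memcm[where x=a])
    using assms by auto
  then obtain w where "map_of (zip keysI witsI) (t,a,b) = Some w"
    using map_of_zip_is_Some[OF lens(2)] by blast
  then have "((t,a,b), w) \<in> set (zip keysI witsI)" by (rule map_of_SomeD)
  then show ?thesis using witsI_ok by (auto simp: list_all_iff)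
qed


locale blocks =
  fixes n :: nat and blk loc ty :: "nat \<Rightarrow> nat"
  assumes loc_lt: "v < n \<Longrightarrow> loc v < sz (ty (blk v))"
    and inj: "u < n \<Longrightarrow> v < n \<Longrightarrow> blk u = blk v \<Longrightarrow> loc u = loc v \<Longrightarrow> u = v"
    and surj: "v < n \<Longrightarrow> x < sz (ty (blk v)) \<Longrightarrow> \<exists>w<n. blk w = blk v \<and> loc w = x"
    and ty_le: "ty i \<le> 2"
begin

definition C :: "nat \<Rightarrow> nat \<Rightarrow> bool" where
  "C u v \<longleftrightarrow> u < n \<and> v < n \<and> blk u = blk v \<and> adjT (ty (blk u)) (loc u) (loc v)"

definition E :: "nat set set" where
  "E = {{u, v} | u v. C u v}"

lemma C_sym: "C u v = C v u"
  unfolding C_def using adjT_sym by auto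

lemma memE: "{u, v} \<in> E \<longleftrightarrow> C u v"
proof
  assume "{u, v} \<in> E"
  then obtain a b where "{u, v} = {a, b}" "C a b" unfolding E_def by auto
  then show "C u v" using C_sym by (auto simp: doubleton_eq_iff)
qed (auto simp: E_def)

lemma C_ne: "C u v \<Longrightarrow> u \<noteq> v"
  unfolding C_def using adjT_irrefl by auto

lemma simple: "simple_graph n E"
  unfolding simple_graph_def E_def
proof safe
  fix u v assume "C u v"
  then show "\<exists>a b. {u, v} = {a, b} \<and> a \<noteq> b \<and> a < n \<and> b < n"
    using C_ne[of u v] by (auto simp: C_def)
qed

lemma degT_card: "degT t x = card {y. y < sz t \<and> adjT t x y}"
proof -
  have "set (filter (adjT t x) [0..<sz t]) = {y. y < sz t \<and> adjT t x y}" by auto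
  then show ?thesis unfolding degT_def using distinct_card[of "filter (adjT t x) [0..<sz t]"] by simp
qed

lemma deg_E: assumes "v < n" shows "deg E v = degT (ty (blk v)) (loc v)"
proof -
  let ?t = "ty (blk v)"
  have "{u. {u, v} \<in> E} = {u. u < n \<and> blk u = blk v \<and> adjT ?t (loc v) (loc u)}"
    using memE C_def adjT_sym assms by auto
  moreover have "bij_betw loc {u. u < n \<and> blk u = blk v \<and> adjT ?t (loc v) (loc u)}
      {y. y < sz ?t \<and> adjT ?t (loc v) y}"
  proof (rule bij_betw_imageI)
    show "inj_on loc {u. u < n \<and> blk u = blk v \<and> adjT ?t (loc v) (loc u)}"
      using inj by (auto intro: inj_onI)
    show "loc ` {u. u < n \<and> blk u = blk v \<and> adjT ?t (loc v) (loc u)} = {y. y < sz ?t \<and> adjT ?t (loc v) y}"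
    proof
      show "loc ` {u. u < n \<and> blk u = blk v \<and> adjT ?t (loc v) (loc u)} \<subseteq> {y. y < sz ?t \<and> adjT ?t (loc v) y}"
        using loc_lt by force
      show "{y. y < sz ?t \<and> adjT ?t (loc v) y} \<subseteq> loc ` {u. u < n \<and> blk u = blk v \<and> adjT ?t (loc v) (loc u)}"
      proof
        fix y assume "y \<in> {y. y < sz ?t \<and> adjT ?t (loc v) y}"
        then obtain w where "w < n" "blk w = blk v" "loc w = y" "adjT ?t (loc v) y"
          using surj[OF assms] by auto
        then show "y \<in> loc ` {u. u < n \<and> blk u = blk v \<and> adjT ?t (loc v) (loc u)}" by force
      qed
    qed
  qed
  ultimately show ?thesis unfolding deg_def degT_card by (simp add: bij_betw_same_card)
qed

lemma deg_ins:
  assumes "u \<noteq> v" "\<not> C u v"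
  shows "deg (insert {u, v} E) w = deg E w + (if w = u \<or> w = v then 1 else 0)"
proof -
  have fin: "finite {x. {x, w} \<in> E}"
  proof (rule finite_subset[of _ "{..<n}"])
    show "{x. {x, w} \<in> E} \<subseteq> {..<n}" using memE C_def by auto
  qed simp
  have eq: "{x. {x, w} \<in> insert {u, v} E} = {x. {x, w} \<in> E} \<union> {x. {x, w} = {u, v}}" by auto
  have "{x. {x, w} = {u, v}} = (if w = u then {v} else if w = v then {u} else {})"
    using assms(1) by (auto simp: doubleton_eq_iff)
  moreover have "w = u \<Longrightarrow> v \<notin> {x. {x, w} \<in> E}" using assms memE C_sym by auto
  moreover have "w = v \<Longrightarrow> u \<notin> {x. {x, w} \<in> E}" using assms memE by auto
  ultimately show ?thesis unfolding deg_def eq using fin assms(1) by (auto simp: card_insert_if)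
qed

lemma len_le_n: "degree_monotone_path n G xs \<Longrightarrow> length xs \<le> n"
proof -
  assume "degree_monotone_path n G xs"
  then have "distinct xs" "set xs \<subseteq> {0..<n}" unfolding degree_monotone_path_def is_path_def by auto
  then show ?thesis using distinct_card[of xs] card_mono[of "{0..<n}" "set xs"] by simp
qed

lemma mp_ge:
  assumes "degree_monotone_path n G xs"
  shows "length xs \<le> mp n G"
proof -
  have "finite (length ` {xs. degree_monotone_path n G xs})"
    by (rule finite_subset[of _ "{..n}"]) (use len_le_n in auto)
  then show ?thesis unfolding mp_def using assms by (auto intro: Max_ge)
qed

lemma no5:
  assumes dp: "degree_monotone_path n E xs"
  shows "length xs \<le> 4"
proof (rule ccontr)
  assume "\<not> length xs \<le> 4"
  then have L: "5 \<le> length xs" by simp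
  from dp have dist: "distinct xs" and rng: "set xs \<subseteq> {0..<n}"
    and adj: "\<And>i. Suc i < length xs \<Longrightarrow> {xs ! i, xs ! Suc i} \<in> E"
    and mono: "sorted (map (deg E) xs) \<or> sorted (rev (map (deg E) xs))"
    unfolding degree_monotone_path_def is_path_def by auto
  have Ci: "C (xs ! i) (xs ! Suc i)" if "i < 4" for i using adj[of i] that L memE by auto
  have lt: "xs ! i < n" if "i < 5" for i
  proof -
    have "xs ! i \<in> set xs" using L that by (intro nth_mem) simp
    then show ?thesis using rng by auto
  qed
  have bk: "blk (xs ! i) = blk (xs ! 0)" if "i < 5" for i
    using that
  proof (induction i)
    case (Suc i) then show ?case using Ci[of i] by (auto simp: C_def)
  qed simp
  define t where "t = ty (blk (xs ! 0))"
  have ad: "adjT t (loc (xs ! i)) (loc (xs ! Suc i))" if "i < 4" for i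
    using Ci[OF that] bk[of i] that unfolding C_def t_def by auto
  have dl: "loc (xs ! i) \<noteq> loc (xs ! j)" if "i < 5" "j < 5" "i \<noteq> j" for i j
  proof
    assume "loc (xs ! i) = loc (xs ! j)"
    then have "xs ! i = xs ! j" using inj[OF lt[OF that(1)] lt[OF that(2)]] bk[OF that(1)] bk[OF that(2)] by simp
    then show False using dist that L by (simp add: nth_eq_iff_index_eq)
  qed
  have dg: "deg E (xs ! i) = degT t (loc (xs ! i))" if "i < 5" for i
    using deg_E[OF lt[OF that]] bk[OF that] t_def by simp
  have mono': "(\<forall>i j. i \<le> j \<longrightarrow> j < 5 \<longrightarrow> deg E (xs ! i) \<le> deg E (xs ! j)) \<or>
      (\<forall>i j. i \<le> j \<longrightarrow> j < 5 \<longrightarrow> deg E (xs ! j) \<le> deg E (xs ! i))"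
  proof (rule disjE[OF mono])
    assume "sorted (map (deg E) xs)"
    then have "deg E (xs ! i) \<le> deg E (xs ! j)" if "i \<le> j" "j < 5" for i j
      using sorted_nth_mono[of "map (deg E) xs" i j] that L by simp
    then show ?thesis by blast
  next
    assume "sorted (rev (map (deg E) xs))"
    then have "deg E (xs ! j) \<le> deg E (xs ! i)" if "i \<le> j" "j < 5" for i j
      using sorted_rev_nth_mono[of "map (deg E) xs" i j] that L by simp
    then show ?thesis by blast
  qed
  show False
  proof (rule no_mono5[of t "loc (xs ! 0)" "loc (xs ! 1)" "loc (xs ! 2)" "loc (xs ! 3)" "loc (xs ! 4)"])
    show "t \<le> 2" unfolding t_def by (rule ty_le)
    show "distinct [loc (xs ! 0), loc (xs ! 1), loc (xs ! 2), loc (xs ! 3), loc (xs ! 4)]"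
      using dl by simp
    show "adjT t (loc (xs ! 0)) (loc (xs ! 1))" using ad[of 0] by simp
    show "adjT t (loc (xs ! 1)) (loc (xs ! 2))" using ad[of 1] by (simp add: Suc_numeral del: One_nat_def)
    show "adjT t (loc (xs ! 2)) (loc (xs ! 3))" using ad[of 2] by (simp add: Suc_numeral del: One_nat_def)
    show "adjT t (loc (xs ! 3)) (loc (xs ! 4))" using ad[of 3] by (simp add: Suc_numeral del: One_nat_def)
    show "degT t (loc (xs ! 0)) \<le> degT t (loc (xs ! 1)) \<and> degT t (loc (xs ! 1)) \<le> degT t (loc (xs ! 2)) \<and> degT t (loc (xs ! 2)) \<le> degT t (loc (xs ! 3)) \<and> degT t (loc (xs ! 3)) \<le> degT t (loc (xs ! 4)) \<or>
    degT t (loc (xs ! 1)) \<le> degT t (loc (xs ! 0)) \<and> degT t (loc (xs ! 2)) \<le> degT t (loc (xs ! 1)) \<and> degT t (loc (xs ! 3)) \<le> degT t (loc (xs ! 2)) \<and> degT t (loc (xs ! 4)) \<le> degT t (loc (xs ! 3))"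
    proof (rule disjE[OF mono'])
      assume H: "\<forall>i j. i \<le> j \<longrightarrow> j < 5 \<longrightarrow> deg E (xs ! i) \<le> deg E (xs ! j)"
      have "deg E (xs ! 0) \<le> deg E (xs ! 1)" "deg E (xs ! 1) \<le> deg E (xs ! 2)"
        "deg E (xs ! 2) \<le> deg E (xs ! 3)" "deg E (xs ! 3) \<le> deg E (xs ! 4)"
        using H[rule_format, of 0 1] H[rule_format, of 1 2] H[rule_format, of 2 3] H[rule_format, of 3 4] by simp_all
      then show ?thesis using dg[of 0] dg[of 1] dg[of 2] dg[of 3] dg[of 4] by simp
    next
      assume H: "\<forall>i j. i \<le> j \<longrightarrow> j < 5 \<longrightarrow> deg E (xs ! j) \<le> deg E (xs ! i)"
      have "deg E (xs ! 1) \<le> deg E (xs ! 0)" "deg E (xs ! 2) \<le> deg E (xs ! 1)"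
        "deg E (xs ! 3) \<le> deg E (xs ! 2)" "deg E (xs ! 4) \<le> deg E (xs ! 3)"
        using H[rule_format, of 0 1] H[rule_format, of 1 2] H[rule_format, of 2 3] H[rule_format, of 3 4] by simp_all
      then show ?thesis using dg[of 0] dg[of 1] dg[of 2] dg[of 3] dg[of 4] by simp
    qed
  qed
qed

lemma mp_le: "mp n E \<le> 4"
proof -
  have "length ` {xs. degree_monotone_path n E xs} \<subseteq> {..4}" using no5 by auto
  moreover have "[] \<in> {xs. degree_monotone_path n E xs}"
    unfolding degree_monotone_path_def is_path_def by simp
  ultimately show ?thesis unfolding mp_def
    by (intro Max.boundedI) (auto intro: finite_subset[of _ "{..4::nat}"])
qed

lemma transport:
  assumes un: "u < n" and vn: "v < n" and uv: "u \<noteq> v" and nC: "\<not> C u v"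
    and ok: "okW (ty (blk u)) (ty (blk v)) intl (False, loc u) pv ws"
    and cs: "(intl \<and> blk u = blk v \<and> pv = (False, loc v)) \<or> (\<not> intl \<and> blk u \<noteq> blk v \<and> pv = (True, loc v))"
  shows "5 \<le> mp n (insert {u, v} E)"
proof -
  let ?t1 = "ty (blk u)" and ?t2 = "ty (blk v)"
  let ?pu = "(False, loc u)"
  define B where "B s = (if s then blk v else blk u)" for s
  define \<phi> where "\<phi> p = (SOME w. w < n \<and> blk w = B (fst p) \<and> loc w = snd p)" for p
  from ok have len: "length ws = 5" and dws: "distinct ws"
    and rng: "\<And>p. p \<in> set ws \<Longrightarrow> snd p < sz (tyS ?t1 ?t2 (fst p))"
    and intl: "intl \<Longrightarrow> (\<And>p. p \<in> set ws \<Longrightarrow> \<not> fst p)"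
    and succ: "successively (madj ?t1 ?t2 ?pu pv) ws"
    and mono: "sorted (map (mdeg ?t1 ?t2 ?pu pv) ws) \<or> sorted (rev (map (mdeg ?t1 ?t2 ?pu pv) ws))"
    unfolding okW_def by (auto simp: list_all_iff)
  have tyB: "ty (B s) = tyS ?t1 ?t2 s" for s unfolding B_def tyS_def by simp
  have sideF: "fst p = False" if "p \<in> set ws" "B (fst p) = blk u" for p
    using cs intl that unfolding B_def by (cases "fst p") auto
  have sideT: "fst p = snd (False, True) \<or> (intl \<and> fst p = False)" if "p \<in> set ws" "B (fst p) = blk v" for p
    using cs intl that unfolding B_def by (cases "fst p") auto
  have phi: "\<phi> p < n \<and> blk (\<phi> p) = B (fst p) \<and> loc (\<phi> p) = snd p" if "p \<in> set ws" for p
  proof -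
    have "\<exists>w<n. blk w = B (fst p) \<and> loc w = snd p"
    proof (cases "fst p")
      case True then show ?thesis using surj[OF vn, of "snd p"] rng[OF that] tyB[of True] unfolding B_def by auto
    next
      case False then show ?thesis using surj[OF un, of "snd p"] rng[OF that] tyB[of False] unfolding B_def by auto
    qed
    then show ?thesis unfolding \<phi>_def by (rule someI_ex[where P="\<lambda>w. w < n \<and> blk w = B (fst p) \<and> loc w = snd p", OF exE]) auto
  qed
  have phi_u: "\<phi> p = u \<longleftrightarrow> p = ?pu" if "p \<in> set ws" for p
  proof
    assume "\<phi> p = u"
    then have "B (fst p) = blk u" "snd p = loc u" using phi[OF that] by auto
    then show "p = ?pu" using sideF[OF that] by (simp add: prod_eq_iff)
  next
    assume "p = ?pu"
    then have "blk (\<phi> p) = blk u" "loc (\<phi> p) = loc u" using phi[OF that] B_def by auto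
    then show "\<phi> p = u" using inj[OF _ un] phi[OF that] by blast
  qed
  have phi_v: "\<phi> p = v \<longleftrightarrow> p = pv" if "p \<in> set ws" for p
  proof
    assume "\<phi> p = v"
    then have b: "B (fst p) = blk v" "snd p = loc v" using phi[OF that] by auto
    show "p = pv"
    proof (cases intl)
      case True then show ?thesis using cs b intl[OF True that] by (simp add: prod_eq_iff)
    next
      case False then show ?thesis using cs b unfolding B_def by (cases "fst p") (auto simp: prod_eq_iff)
    qed
  next
    assume "p = pv"
    then have "blk (\<phi> p) = blk v" "loc (\<phi> p) = loc v" using phi[OF that] cs B_def by auto
    then show "\<phi> p = v" using inj[OF _ vn] phi[OF that] by blast
  qed
  have injphi: "inj_on \<phi> (set ws)"
  proof (rule inj_onI)
    fix p q assume p: "p \<in> set ws" and q: "q \<in> set ws" and e: "\<phi> p = \<phi> q"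
    have "B (fst p) = B (fst q)" "snd p = snd q" using phi[OF p] phi[OF q] e by auto
    moreover have "fst p = fst q"
    proof (cases intl)
      case True then show ?thesis using intl[OF True p] intl[OF True q] by simp
    next
      case False then have "blk u \<noteq> blk v" using cs by auto
      then show ?thesis using \<open>B (fst p) = B (fst q)\<close> unfolding B_def by (auto split: if_splits)
    qed
    ultimately show "p = q" by (simp add: prod_eq_iff)
  qed
  define xs where "xs = map \<phi> ws"
  have lenx: "length xs = 5" unfolding xs_def using len by simp
  have dm: "degree_monotone_path n (insert {u, v} E) xs"
    unfolding degree_monotone_path_def is_path_def
  proof (intro conjI allI impI)
    show "distinct xs" unfolding xs_def using dws injphi by (simp add: distinct_map)
    show "set xs \<subseteq> {0..<n}" unfolding xs_def using phi by auto
    fix i assume i: "Suc i < length xs"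
    then have ip: "ws ! i \<in> set ws" and iq: "ws ! Suc i \<in> set ws" using lenx len by (auto simp: xs_def)
    have md: "madj ?t1 ?t2 ?pu pv (ws ! i) (ws ! Suc i)" using succ i len lenx
      by (auto simp: successively_conv_nth xs_def)
    have xi: "xs ! i = \<phi> (ws ! i)" "xs ! Suc i = \<phi> (ws ! Suc i)" using i len lenx by (auto simp: xs_def)
    show "{xs ! i, xs ! Suc i} \<in> insert {u, v} E"
      using md unfolding madj_def
    proof (elim disjE conjE)
      assume s: "fst (ws ! i) = fst (ws ! Suc i)" and a: "adjT (tyS ?t1 ?t2 (fst (ws ! i))) (snd (ws ! i)) (snd (ws ! Suc i))"
      have "C (\<phi> (ws ! i)) (\<phi> (ws ! Suc i))"
        unfolding C_def using phi[OF ip] phi[OF iq] s a tyB by auto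
      then show ?thesis using memE xi by auto
    next
      assume "ws ! i = ?pu" "ws ! Suc i = pv"
      then show ?thesis using xi phi_u[OF ip] phi_v[OF iq] by auto
    next
      assume "ws ! i = pv" "ws ! Suc i = ?pu"
      then show ?thesis using xi phi_u[OF iq] phi_v[OF ip] by auto
    qed
  next
    have "map (deg (insert {u, v} E)) xs = map (mdeg ?t1 ?t2 ?pu pv) ws"
      unfolding xs_def map_map
    proof (rule map_cong[OF refl])
      fix p assume p: "p \<in> set ws"
      have "deg (insert {u, v} E) (\<phi> p) = deg E (\<phi> p) + (if \<phi> p = u \<or> \<phi> p = v then 1 else 0)"
        by (rule deg_ins[OF uv nC])
      also have "\<dots> = mdeg ?t1 ?t2 ?pu pv p"
        unfolding mdeg_def using deg_E[of "\<phi> p"] phi[OF p] phi_u[OF p] phi_v[OF p] tyB by auto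
      finally show "(deg (insert {u, v} E) \<circ> \<phi>) p = mdeg ?t1 ?t2 ?pu pv p" by simp
    qed
    then show "sorted (map (deg (insert {u, v} E)) xs) \<or> sorted (rev (map (deg (insert {u, v} E)) xs))"
      using mono by simp
  qed
  show ?thesis using mp_ge[OF dm] lenx by simp
qed

lemma sat_edge:
  assumes un: "u < n" and vn: "v < n" and uv: "u \<noteq> v" and nE: "{u, v} \<notin> E"
  shows "5 \<le> mp n (insert {u, v} E)"
proof -
  have nC: "\<not> C u v" using nE memE by simp
  show ?thesis
  proof (cases "blk u = blk v")
    case True
    have "loc u \<noteq> loc v" using inj[OF un vn True] uv by auto
    moreover have "\<not> adjT (ty (blk u)) (loc u) (loc v)" using nC un vn True unfolding C_def by auto
    ultimately obtain ws where "okW (ty (blk u)) (ty (blk u)) True (False, loc u) (False, loc v) ws"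
      using wit_int[OF ty_le loc_lt[OF un]] loc_lt[OF vn] True by force
    then show ?thesis using transport[OF un vn uv nC, of True "(False, loc v)" ws] True by simp
  next
    case False
    obtain ws where "okW (ty (blk u)) (ty (blk v)) False (False, loc u) (True, loc v) ws"
      using wit_cross[OF ty_le ty_le loc_lt[OF un] loc_lt[OF vn]] by blast
    then show ?thesis using transport[OF un vn uv nC, of False "(True, loc v)" ws] False by simp
  qed
qed

lemma E_saturated: "saturated 5 n E"
  unfolding saturated_def using simple mp_le sat_edge by auto

end



definition preL :: "nat \<Rightarrow> nat list" where
  "preL r = (if r = 1 then [0,0,1] else if r = 2 then [0,0] else if r = 3 then [0,1]
     else if r = 4 then [0] else if r = 5 then [1] else [])"

definition pp :: "nat \<Rightarrow> nat" where "pp r = sum_list (map sz (preL r))"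

definition blkL :: "nat \<Rightarrow> nat list" where
  "blkL r = concat (map (\<lambda>i. replicate (sz (preL r ! i)) i) [0..<length (preL r)])"

definition locL :: "nat \<Rightarrow> nat list" where
  "locL r = concat (map (\<lambda>t. [0..<sz t]) (preL r))"

definition lay_blk :: "nat \<Rightarrow> nat \<Rightarrow> nat" where
  "lay_blk r v = (if v < pp r then blkL r ! v else length (preL r) + (v - pp r) div 6)"

definition lay_loc :: "nat \<Rightarrow> nat \<Rightarrow> nat" where
  "lay_loc r v = (if v < pp r then locL r ! v else (v - pp r) mod 6)"

definition lay_ty :: "nat \<Rightarrow> nat \<Rightarrow> nat" where
  "lay_ty r i = (if i < length (preL r) then preL r ! i else 2)"

definition lpre :: "nat \<Rightarrow> nat set list" where
  "lpre r = [{u, v}. u \<leftarrow> [0..<pp r], v \<leftarrow> filter (\<lambda>v. u < v \<and> blkL r ! u = blkL r ! v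
      \<and> adjT (preL r ! (blkL r ! u)) (locL r ! u) (locL r ! v)) [0..<pp r]]"

definition finA :: "nat \<Rightarrow> bool" where
  "finA r \<longleftrightarrow> pp r mod 6 = r \<and> pp r \<le> (if r = 1 then 13 else 9) \<and> list_all (\<lambda>t. t \<le> 1) (preL r)
     \<and> 6 * length (lpre r) \<le> 7 * pp r + c r"

definition finV :: "nat \<Rightarrow> bool" where
  "finV r \<longleftrightarrow> (\<forall>v\<in>set [0..<pp r]. blkL r ! v < length (preL r) \<and> locL r ! v < sz (preL r ! (blkL r ! v)))"

definition finI :: "nat \<Rightarrow> bool" where
  "finI r \<longleftrightarrow> (\<forall>u\<in>set [0..<pp r]. \<forall>v\<in>set [0..<pp r]. blkL r ! u = blkL r ! v \<and> locL r ! u = locL r ! v \<longrightarrow> u = v)"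

definition finS :: "nat \<Rightarrow> bool" where
  "finS r \<longleftrightarrow> (\<forall>v\<in>set [0..<pp r]. \<forall>x\<in>set [0..<sz (preL r ! (blkL r ! v))].
           \<exists>w\<in>set [0..<pp r]. blkL r ! w = blkL r ! v \<and> locL r ! w = x)"

definition fin :: "nat \<Rightarrow> bool" where
  "fin r \<longleftrightarrow> finA r \<and> finV r \<and> finI r \<and> finS r"

lemma fin_all: "list_all fin [0..<6]"
  by code_simp

lemma fin: "r < 6 \<Longrightarrow> fin r"
  using fin_all by (auto simp: list_all_iff)

lemma edgesT_lt: "(a, b) \<in> set (edgesT t) \<Longrightarrow> a < sz t \<and> b < sz t"
  using adjT_lt adjT_def by blast

context
  fixes n r m :: nat
  assumes n8: "n \<ge> 8" and r_def: "r = n mod 6" and m_def: "m = (n - pp r) div 6"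
begin

lemma F: "fin r" using fin r_def by simp

lemma F1: "pp r mod 6 = r" "pp r \<le> (if r = 1 then 13 else 9)" "list_all (\<lambda>t. t \<le> 1) (preL r)"
  "6 * length (lpre r) \<le> 7 * pp r + c r"
proof -
  have "finA r" using F unfolding fin_def by (elim conjE)
  then show "pp r mod 6 = r" "pp r \<le> (if r = 1 then 13 else 9)" "list_all (\<lambda>t. t \<le> 1) (preL r)"
    "6 * length (lpre r) \<le> 7 * pp r + c r" unfolding finA_def by simp_all
qed

lemma Fv: assumes "v < pp r" shows "blkL r ! v < length (preL r) \<and> locL r ! v < sz (preL r ! (blkL r ! v))"
proof -
  have f: "finV r" using F unfolding fin_def by (elim conjE)
  have "v \<in> set [0..<pp r]" using assms by (auto simp only: set_upt atLeastLessThan_iff)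
  with f show ?thesis unfolding finV_def by (rule bspec)
qed

lemma Fi: assumes "u < pp r" "v < pp r" "blkL r ! u = blkL r ! v" "locL r ! u = locL r ! v" shows "u = v"
proof -
  have f: "finI r" using F unfolding fin_def by (elim conjE)
  have "u \<in> set [0..<pp r]" "v \<in> set [0..<pp r]" using assms by (auto simp only: set_upt atLeastLessThan_iff)
  with f assms(3,4) show ?thesis unfolding finI_def by blast
qed

lemma Fs: assumes "v < pp r" "x < sz (preL r ! (blkL r ! v))" shows "\<exists>w<pp r. blkL r ! w = blkL r ! v \<and> locL r ! w = x"
proof -
  have f: "finS r" using F unfolding fin_def by (elim conjE)
  have "v \<in> set [0..<pp r]" "x \<in> set [0..<sz (preL r ! (blkL r ! v))]" using assms by (auto simp only: set_upt atLeastLessThan_iff)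
  with f obtain w where "w \<in> set [0..<pp r]" "blkL r ! w = blkL r ! v \<and> locL r ! w = x" unfolding finS_def by blast
  moreover have "w < pp r" using calculation(1) by (auto simp only: set_upt atLeastLessThan_iff)
  ultimately show ?thesis by blast
qed

lemma pp_le: "pp r \<le> n"
proof -
  have a: "pp r mod 6 = n mod 6" and b: "pp r \<le> (if n mod 6 = 1 then 13 else 9)"
    using F1 r_def by auto
  show ?thesis
  proof (rule ccontr)
    assume "\<not> pp r \<le> n"
    then have lt: "n < pp r" by simp
    have "pp r \<le> 13" using b by (simp split: if_splits)
    then have "n = 8 \<or> n = 9 \<or> n = 10 \<or> n = 11 \<or> n = 12" using lt n8 by arith
    then show False using a b lt by (elim disjE; simp; presburger)
  qed
qed

lemma n_eq: "n = pp r + 6 * m"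
proof -
  have "pp r mod 6 = n mod 6" using F1 r_def by auto
  then have "6 dvd n - pp r" using mod_eq_dvd_iff_nat[OF pp_le, of 6] by simp
  then have "(n - pp r) mod 6 = 0" by simp
  then have "n - pp r = 6 * m" unfolding m_def using div_mult_mod_eq[of "n - pp r" 6] by simp
  then show ?thesis using pp_le by simp
qed

lemma lay_blocks: "blocks n (lay_blk r) (lay_loc r) (lay_ty r)"
proof
  fix v assume vn: "v < n"
  show "lay_loc r v < sz (lay_ty r (lay_blk r v))"
  proof (cases "v < pp r")
    case True then show ?thesis using Fv[OF True] by (simp add: lay_loc_def lay_ty_def lay_blk_def)
  next
    case False then show ?thesis by (simp add: lay_loc_def lay_ty_def lay_blk_def sz_def)
  qed
next
  fix u v assume un: "u < n" and vn: "v < n" and b: "lay_blk r u = lay_blk r v" and l: "lay_loc r u = lay_loc r v"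
  show "u = v"
  proof (cases "u < pp r"; cases "v < pp r")
    assume "u < pp r" "v < pp r" then show ?thesis using b l Fi by (simp add: lay_blk_def lay_loc_def)
  next
    assume "u < pp r" "\<not> v < pp r" then show ?thesis using b Fv[of u] by (simp add: lay_blk_def)
  next
    assume "\<not> u < pp r" "v < pp r" then show ?thesis using b Fv[of v] by (simp add: lay_blk_def)
  next
    assume a: "\<not> u < pp r" "\<not> v < pp r"
    then have "(u - pp r) div 6 = (v - pp r) div 6" "(u - pp r) mod 6 = (v - pp r) mod 6"
      using b l by (simp_all add: lay_blk_def lay_loc_def)
    then have "u - pp r = v - pp r" by (metis div_mult_mod_eq)
    then show ?thesis using a by simp
  qed
next
  fix v x assume vn: "v < n" and x: "x < sz (lay_ty r (lay_blk r v))"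
  show "\<exists>w<n. lay_blk r w = lay_blk r v \<and> lay_loc r w = x"
  proof (cases "v < pp r")
    case True
    have "x < sz (preL r ! (blkL r ! v))" using x True Fv[OF True] by (simp add: lay_ty_def lay_blk_def)
    then obtain w where "w < pp r" "blkL r ! w = blkL r ! v" "locL r ! w = x" using Fs[OF True] by blast
    then show ?thesis using True pp_le by (intro exI[of _ w]) (auto simp: lay_blk_def lay_loc_def)
  next
    case False
    define q where "q = (v - pp r) div 6"
    have x6: "x < 6" using x False by (simp add: lay_ty_def lay_blk_def sz_def)
    have "v - pp r < 6 * m" using vn n_eq False by simp
    then have qm: "q < m" unfolding q_def by simp
    define w where "w = pp r + 6 * q + x"
    have "w < n" unfolding w_def using qm x6 n_eq by simp
    moreover have "lay_blk r w = lay_blk r v" "lay_loc r w = x"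
      unfolding w_def lay_blk_def lay_loc_def q_def using False x6 by auto
    ultimately show ?thesis by blast
  qed
next
  fix i
  show "lay_ty r i \<le> 2"
  proof (cases "i < length (preL r)")
    case True
    then have "preL r ! i \<in> set (preL r)" by (rule nth_mem)
    then have "preL r ! i \<le> 1" using F1(3) by (auto simp: list_all_iff)
    then show ?thesis using True unfolding lay_ty_def by simp
  qed (simp add: lay_ty_def)
qed

lemma card_bound: "6 * card (blocks.E n (lay_blk r) (lay_loc r) (lay_ty r)) \<le> 7 * n + c r"
proof -
  interpret blocks n "lay_blk r" "lay_loc r" "lay_ty r" by (rule lay_blocks)
  define g where "g = (\<lambda>(j, (a::nat, b::nat)). {pp r + 6 * j + a, pp r + 6 * j + b})"
  have inpre: "{u, v} \<in> set (lpre r)" if "u < v" "v < pp r" "C u v" for u v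
  proof -
    have "u < pp r" using that by simp
    then have "blkL r ! u = blkL r ! v \<and> adjT (preL r ! (blkL r ! u)) (locL r ! u) (locL r ! v)"
      using that Fv[of u] unfolding C_def by (auto simp: lay_blk_def lay_loc_def lay_ty_def)
    then show ?thesis unfolding lpre_def using that
      by (intro memcm[of u]) auto
  qed
  have sub: "E \<subseteq> set (lpre r) \<union> g ` ({..<m} \<times> set (edgesT 2))"
  proof
    fix e assume "e \<in> E"
    then obtain u v where e: "e = {u, v}" and Cuv: "C u v" unfolding E_def by auto
    have un: "u < n" and vn: "v < n" and bb: "lay_blk r u = lay_blk r v"
      and ad: "adjT (lay_ty r (lay_blk r u)) (lay_loc r u) (lay_loc r v)" using Cuv unfolding C_def by auto
    show "e \<in> set (lpre r) \<union> g ` ({..<m} \<times> set (edgesT 2))"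
    proof (cases "u < pp r \<or> v < pp r")
      case True
      have "u < pp r \<and> v < pp r"
        using True bb Fv[of u] Fv[of v] by (auto simp: lay_blk_def split: if_splits)
      moreover have "u \<noteq> v" using C_ne[OF Cuv] .
      ultimately have "{u, v} \<in> set (lpre r)"
        using inpre[of u v] inpre[of v u] Cuv C_sym[of u v] by (cases "u < v") (auto simp: insert_commute)
      then show ?thesis using e by simp
    next
      case False
      define q where "q = (u - pp r) div 6"
      have q2: "q = (v - pp r) div 6" using bb False unfolding q_def by (simp add: lay_blk_def)
      have adj2: "adjT 2 ((u - pp r) mod 6) ((v - pp r) mod 6)"
        using ad False by (simp add: lay_ty_def lay_blk_def lay_loc_def)
      have uq: "u = pp r + 6 * q + (u - pp r) mod 6" using False unfolding q_def by simp
      have vq: "v = pp r + 6 * q + (v - pp r) mod 6" using False unfolding q2 by simp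
      have "u - pp r < 6 * m" using un n_eq False by (simp; linarith)
      then have qm: "q < m" unfolding q_def by simp
      from adj2 have "((u - pp r) mod 6, (v - pp r) mod 6) \<in> set (edgesT 2) \<or> ((v - pp r) mod 6, (u - pp r) mod 6) \<in> set (edgesT 2)"
        unfolding adjT_def .
      then show ?thesis
      proof
        assume h: "((u - pp r) mod 6, (v - pp r) mod 6) \<in> set (edgesT 2)"
        have "e = g (q, ((u - pp r) mod 6, (v - pp r) mod 6))" unfolding g_def e using uq vq by simp
        then show ?thesis using h qm by blast
      next
        assume h: "((v - pp r) mod 6, (u - pp r) mod 6) \<in> set (edgesT 2)"
        have "e = g (q, ((v - pp r) mod 6, (u - pp r) mod 6))" unfolding g_def e using uq vq by (simp add: insert_commute)
        then show ?thesis using h qm by blast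
      qed
    qed
  qed
  have "card E \<le> card (set (lpre r) \<union> g ` ({..<m} \<times> set (edgesT 2)))"
    by (rule card_mono[OF _ sub]) simp
  also have "\<dots> \<le> card (set (lpre r)) + card (g ` ({..<m} \<times> set (edgesT 2)))" by (rule card_Un_le)
  also have "\<dots> \<le> length (lpre r) + m * 7"
  proof -
    have "card (g ` ({..<m} \<times> set (edgesT 2))) \<le> card ({..<m} \<times> set (edgesT 2))" by (rule card_image_le) simp
    also have "\<dots> = m * 7" by (simp add: card_cartesian_product edgesT_def)
    finally show ?thesis using card_length[of "lpre r"] by simp
  qed
  finally have "card E \<le> length (lpre r) + m * 7" .
  moreover have "6 * length (lpre r) \<le> 7 * pp r + c r" using F1 by auto
  ultimately show ?thesis using n_eq by simp
qed

end

theorem proposition2p8: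
  fixes n :: nat
  assumes "n \<ge> 8"
  shows "\<exists>m. h n 5 = enat m \<and> real m \<le> (7 * real n + real (c (n mod 6))) / 6"
proof -
  define r where "r = n mod 6"
  define E0 where "E0 = blocks.E n (lay_blk r) (lay_loc r) (lay_ty r)"
  have bl: "blocks n (lay_blk r) (lay_loc r) (lay_ty r)" by (rule lay_blocks[OF assms r_def refl])
  have sat: "saturated 5 n E0" unfolding E0_def by (rule blocks.E_saturated[OF bl])
  have cb: "6 * card E0 \<le> 7 * n + c r" unfolding E0_def by (rule card_bound[OF assms r_def refl])
  define S where "S = {enat (card E) | E. saturated 5 n E}"
  have E0S: "enat (card E0) \<in> S" unfolding S_def using sat by blast
  then have ne: "S \<noteq> {}" by blast
  have "(LEAST x. x \<in> S) \<in> S" using E0S by (rule LeastI)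
  moreover have "Inf S = (LEAST x. x \<in> S)" unfolding Inf_enat_def using ne by (rule if_not_P)
  ultimately have inS: "Inf S \<in> S" by simp
  then have "\<exists>E. Inf S = enat (card E) \<and> saturated 5 n E" unfolding S_def by (simp only: mem_Collect_eq)
  then obtain E1 :: "nat set set" where E1: "Inf S = enat (card E1)" by blast
  have "Inf S \<le> enat (card E0)" using E0S by (rule Inf_lower)
  then have le: "card E1 \<le> card E0" using E1 by simp
  have hS: "h n 5 = Inf S" unfolding h_def S_def by (rule refl)
  have "6 * card E1 \<le> 7 * n + c r" using le cb by linarith
  then have "real (6 * card E1) \<le> real (7 * n + c r)" by (simp only: of_nat_le_iff)
  then have "real (card E1) \<le> (7 * real n + real (c r)) / 6" by simp
  then have "real (card E1) \<le> (7 * real n + real (c (n mod 6))) / 6" unfolding r_def .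
  then show ?thesis using hS E1 by (intro exI[of _ "card E1"]) simp
qed

end
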